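(* Let $a,b,c,d,P_{\max}>0$ and set $\beta=b(1+dP_{\max})$. Consider the frontier curve $\Phi_1$, given as the graph of $$h(r_2)=\log_2\!\left(1+\frac{aP_{\max}}{1+\frac{b}{c}(1+dP_{\max})(2^{r_2}-1)}\right),\qquad r_2\ge0,$$ which expresses $r_1$ as a function of $r_2$. Let $P_2=\frac1c(1+dP_{\max})(2^{r_2}-1)$ be the corresponding power of user 2. Then $$\operatorname{sign}\big(h''(r_2)\big)=\operatorname{sign}(P_2-Q_2),$$ where $$Q_2=\frac{\Re\!\left(\sqrt{(c-\beta)(c-\beta+acP_{\max})}\right)-\beta}{cb}.$$ In particular, $\Phi_1$ restricted to $P_2\in[0,P_{\max}]$ is convex if $Q_2\le0$ and concave if $Q_2\ge P_{\max}$. If $0<Q_2<P_{\max}$, it has a non-stationary inflection point at $P_2=Q_2$.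
   Context: The channel power gains are normalized by the noise variance: $a$ (direct gain of user 1), $b$ (interference gain from transmitter 2 at receiver 1), $c$ (direct gain of user 2), $d$ (interference gain from transmitter 1 at receiver 2). The rates are $R_1(P_1,P_2)=\log_2\!\left(1+\frac{aP_1}{1+bP_2}\right)$ and $R_2(P_1,P_2)=\log_2\!\left(1+\frac{cP_2}{1+dP_1}\right)$. The curve $\Phi_1$ is the set of rate pairs obtained with $P_1=P_{\max}$ and $P_2$ ranging over $[0,P_{\max}]$. $\Re$ denotes the real part. *)

theory Defs
  imports "HOL-Analysis.Analysis"
begin

definition frontier_h :: "real \<Rightarrow> real \<Rightarrow> real \<Rightarrow> real \<Rightarrow> real \<Rightarrow> real \<Rightarrow> real" where
  "frontier_h a b c d Pmax r2 =
     log 2 (1 + a * Pmax / (1 + (b / c) * (1 + d * Pmax) * (2 powr r2 - 1)))"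

definition power2_of :: "real \<Rightarrow> real \<Rightarrow> real \<Rightarrow> real \<Rightarrow> real" where
  "power2_of c d Pmax r2 = (1 / c) * (1 + d * Pmax) * (2 powr r2 - 1)"

definition beta_const :: "real \<Rightarrow> real \<Rightarrow> real \<Rightarrow> real" where
  "beta_const b d Pmax = b * (1 + d * Pmax)"

definition Q2_const :: "real \<Rightarrow> real \<Rightarrow> real \<Rightarrow> real \<Rightarrow> real \<Rightarrow> real" where
  "Q2_const a b c d Pmax =
     (let \<beta> = beta_const b d Pmax in
      (Re (csqrt (complex_of_real ((c - \<beta>) * (c - \<beta> + a * c * Pmax)))) - \<beta>) / (c * b))"

text \<open>Rate r_2 at which P_2 = Pmax (upper end of P_2 in [0,Pmax]).\<close>
definition r2_max :: "real \<Rightarrow> real \<Rightarrow> real \<Rightarrow> real" where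
  "r2_max c d Pmax = log 2 (1 + c * Pmax / (1 + d * Pmax))"

end

theory Submission
  imports Defs
begin

lemma Re_csqrt_real: "Re (csqrt (complex_of_real y)) = (if y \<ge> 0 then sqrt y else 0)"
  by (simp add: csqrt_of_real')

lemma sgn_eqI: fixes u v :: real assumes "u > 0 \<longleftrightarrow> v > 0" "u < 0 \<longleftrightarrow> v < 0" shows "sgn u = sgn v"
  using assms by (auto simp: sgn_real_def)

lemma alg1: fixes D A m :: real assumes "D > 0" "A > 0"
  shows "sgn ((m+A)/(D+A)^2 - m/D^2) = sgn (D^2 - 2*m*D - m*A)"
proof -
  have "(m+A)/(D+A)^2 - m/D^2 = A * (D^2 - 2*m*D - m*A) / (D^2 * (D+A)^2)"
  proof -
    have "D \<noteq> 0" "D + A \<noteq> 0" using assms by auto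
    thus ?thesis by (simp add: divide_simps) (simp add: algebra_simps power2_eq_square)
  qed
  moreover have "D^2 * (D+A)^2 > 0" using assms by simp
  ultimately show ?thesis using assms
    by (simp add: sgn_mult sgn_divide)
qed

lemma alg2: fixes D A m :: real assumes "D > 0" "A > 0"
  and T: "T = (if m*(m+A) \<ge> 0 then sqrt (m*(m+A)) else 0)"
  shows "sgn (D^2 - 2*m*D - m*A) = sgn (D - m - T)"
proof (cases "m*(m+A) \<ge> 0")
  case True
  hence T2: "T^2 = m*(m+A)" "T \<ge> 0" using T by auto
  have pos: "D - m + T > 0"
  proof (cases "m \<ge> 0")
    case True
    have "m^2 \<le> T^2" using T2 True assms by (simp add: power2_eq_square algebra_simps)
    hence "m \<le> T" using T2 True by (meson power2_le_imp_le)
    thus ?thesis using assms by linarith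
  next
    case False thus ?thesis using assms T2 by linarith
  qed
  have "D^2 - 2*m*D - m*A = (D - m - T) * (D - m + T)"
    using T2 by (simp add: algebra_simps power2_eq_square)
  thus ?thesis using pos by (simp add: sgn_mult)
next
  case False
  have m: "m < 0" using False assms mult_nonneg_nonneg[of m "m+A"] by force
  have "T = 0" using False T by simp
  have "m*D < 0" "m*A < 0" using m assms by (simp_all add: mult_neg_pos)
  moreover have "D^2 - 2*m*D - m*A = D^2 - 2*(m*D) - (m*A)" by (simp add: algebra_simps)
  moreover have "D^2 > 0" using assms by simp
  ultimately have "D^2 - 2*m*D - m*A > 0" by linarith
  moreover have "D - m - T > 0" using \<open>T = 0\<close> m assms by simp
  ultimately show ?thesis by simp
qed

definition DD :: "real \<Rightarrow> real \<Rightarrow> real" where "DD K r = 1 + K*(2 powr r - 1)"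
definition h1 :: "real \<Rightarrow> real \<Rightarrow> real \<Rightarrow> real" where "h1 K A r = K * (2 powr r / (DD K r + A) - 2 powr r / DD K r)"
definition h2 :: "real \<Rightarrow> real \<Rightarrow> real \<Rightarrow> real" where "h2 K A r = K * ln 2 * 2 powr r * ((1-K+A)/(DD K r + A)^2 - (1-K)/(DD K r)^2)"

lemma DD_deriv: "(DD K has_real_derivative K * (2 powr r * ln 2)) (at r)"
  unfolding DD_def by (auto intro!: derivative_eq_intros)

lemma h1_deriv: assumes "DD K r > 0" "A > 0" shows "(h1 K A has_real_derivative h2 K A r) (at r)"
proof -
  let ?x = "2 powr r" and ?D = "DD K r"
  have p: "?D + A \<noteq> 0" "?D \<noteq> 0" using assms by auto
  have "((\<lambda>r. K * (2 powr r / (DD K r + A) - 2 powr r / DD K r)) has_real_derivative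
     K * ((?x * ln 2 * (?D + A) - ?x * (K * (?x * ln 2))) / (?D + A)^2 - (?x * ln 2 * ?D - ?x * (K * (?x * ln 2))) / ?D^2)) (at r)"
    apply (intro DERIV_cmult DERIV_diff DERIV_divide DERIV_add DD_deriv DERIV_const)
    using p by (auto intro!: derivative_eq_intros DD_deriv simp: power2_eq_square)
  moreover have "K * ((?x * ln 2 * (?D + A) - ?x * (K * (?x * ln 2))) / (?D + A)^2 - (?x * ln 2 * ?D - ?x * (K * (?x * ln 2))) / ?D^2) = h2 K A r"
  proof -
    have e: "?D - K * ?x = 1 - K" unfolding DD_def by (simp add: algebra_simps)
    have a: "?x * ln 2 * (?D + A) - ?x * (K * (?x * ln 2)) = ?x * ln 2 * ((?D - K * ?x) + A)"
      and b: "?x * ln 2 * ?D - ?x * (K * (?x * ln 2)) = ?x * ln 2 * (?D - K * ?x)" by (simp_all add: algebra_simps)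
    note a = a[unfolded e] and b = b[unfolded e]
    show ?thesis unfolding a b h2_def by (simp add: algebra_simps)
  qed
  ultimately show ?thesis unfolding h1_def[abs_def] by simp
qed

definition gg :: "real \<Rightarrow> real \<Rightarrow> real \<Rightarrow> real" where "gg K A r = (ln (DD K r + A) - ln (DD K r)) / ln 2"

lemma gg_deriv: assumes "DD K r > 0" "A > 0" shows "(gg K A has_real_derivative h1 K A r) (at r)"
proof -
  have "((\<lambda>r. (ln (DD K r + A) - ln (DD K r)) / ln 2) has_real_derivative
     ((K * (2 powr r * ln 2)) / (DD K r + A) - (K * (2 powr r * ln 2)) / DD K r) / ln 2) (at r)"
    using assms by (auto intro!: derivative_eq_intros DD_deriv)
  moreover have "((K * (2 powr r * ln 2)) / (DD K r + A) - (K * (2 powr r * ln 2)) / DD K r) / ln 2 = h1 K A r"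
  proof -
    have l: "ln (2::real) \<noteq> 0" by simp
    have "\<And>u v. u * ln 2 / (DD K r + A) - v * ln 2 / DD K r = (u / (DD K r + A) - v / DD K r) * ln 2"
      by (simp add: algebra_simps)
    hence "(K * (2 powr r * ln 2)) / (DD K r + A) - (K * (2 powr r * ln 2)) / DD K r
       = (K * 2 powr r / (DD K r + A) - K * 2 powr r / DD K r) * ln 2"
      by (metis mult.assoc)
    thus ?thesis unfolding h1_def using l by (simp add: right_diff_distrib)
  qed
  ultimately show ?thesis unfolding gg_def[abs_def] by simp
qed

lemma DD_ge1: assumes "K > 0" "r \<ge> 0" shows "DD K r \<ge> 1"
proof -
  have "2 powr r \<ge> 1" using assms by (simp add: ge_one_powr_ge_zero)
  thus ?thesis unfolding DD_def using assms by simp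
qed

theorem mainTheorem7:
  fixes a b c d Pmax :: real
  assumes "a > 0" and "b > 0" and "c > 0" and "d > 0" and "Pmax > 0"
  defines "h \<equiv> frontier_h a b c d Pmax"
    and "Q2 \<equiv> Q2_const a b c d Pmax"
    and "R \<equiv> r2_max c d Pmax"
  shows "(\<forall>r2 \<ge> 0. sgn (deriv (deriv h) r2) = sgn (power2_of c d Pmax r2 - Q2))
     \<and> (Q2 \<le> 0 \<longrightarrow> convex_on {0..R} h)
     \<and> (Q2 \<ge> Pmax \<longrightarrow> concave_on {0..R} h)
     \<and> (0 < Q2 \<and> Q2 < Pmax \<longrightarrow>
          (\<exists>r2\<in>{0<..<R}. power2_of c d Pmax r2 = Q2
             \<and> deriv h r2 \<noteq> 0
             \<and> (\<forall>r\<in>{0..<r2}. deriv (deriv h) r < 0)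
             \<and> (\<forall>r\<in>{r2<..R}. deriv (deriv h) r > 0)))"
proof -
  define K where "K = (b/c)*(1+d*Pmax)"
  define A where "A = a*Pmax"
  define m where "m = 1 - K"
  define T where "T = (if m*(m+A) \<ge> 0 then sqrt (m*(m+A)) else 0)"
  define S where "S = {r. 0 < DD K r}"
  have Kp: "K > 0" unfolding K_def using assms by (intro mult_pos_pos divide_pos_pos add_pos_pos) auto
  have Ap: "A > 0" unfolding A_def using assms by simp
  have hr: "h r = log 2 (1 + A / DD K r)" for r
    unfolding h_def frontier_h_def DD_def K_def A_def by simp
  have Sopen: "open S" unfolding S_def DD_def
    by (intro open_Collect_less continuous_intros) auto
  have S0: "r \<in> S" if "r \<ge> 0" for r using DD_ge1[OF Kp that] unfolding S_def by simp
  have hg: "h r = gg K A r" if "r \<in> S" for r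
  proof -
    have D: "DD K r > 0" using that S_def by simp
    have "1 + A / DD K r = (DD K r + A) / DD K r" using D by (simp add: field_simps)
    hence "h r = ln ((DD K r + A) / DD K r) / ln 2" unfolding hr log_def by simp
    also have "\<dots> = gg K A r" unfolding gg_def using D Ap by (simp add: ln_div)
    finally show ?thesis .
  qed
  have d1: "(h has_real_derivative h1 K A r) (at r)" if "r \<in> S" for r
    by (rule has_field_derivative_transform_within_open[OF gg_deriv Sopen that])
       (use that hg S_def Ap in auto)
  have dh: "deriv h r = h1 K A r" if "r \<in> S" for r using d1[OF that] by (rule DERIV_imp_deriv)
  have d2: "(deriv h has_real_derivative h2 K A r) (at r)" if "r \<in> S" for r
    by (rule has_field_derivative_transform_within_open[OF h1_deriv Sopen that])
       (use that dh S_def Ap in auto)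
  have dd: "deriv (deriv h) r = h2 K A r" if "r \<in> S" for r using d2[OF that] by (rule DERIV_imp_deriv)
  have P2: "power2_of c d Pmax r = (DD K r - 1) / b" for r
    unfolding power2_of_def DD_def K_def using assms by (simp add: field_simps)
  have Q2: "Q2 = (T - K) / b"
  proof -
    have e: "(c - beta_const b d Pmax) * (c - beta_const b d Pmax + a * c * Pmax) = c^2 * (m*(m+A))"
      unfolding beta_const_def m_def K_def A_def using assms by (simp add: field_simps power2_eq_square)
    have "Re (csqrt (complex_of_real (c^2 * (m*(m+A))))) = c * T"
      unfolding Re_csqrt_real T_def using assms
      by (auto simp: real_sqrt_mult zero_le_mult_iff)
    moreover have "beta_const b d Pmax = c * K" unfolding beta_const_def K_def using assms by simp
    ultimately show ?thesis unfolding Q2_def Q2_const_def Let_def e using assms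
      by (simp add: field_simps)
  qed
  have sg: "sgn (h2 K A r) = sgn (power2_of c d Pmax r - Q2)" if "r \<ge> 0" for r
  proof -
    have D: "DD K r > 0" using DD_ge1[OF Kp that] by simp
    have e: "DD K r - 1 + K = DD K r - (1 - K)" by simp
    have "sgn (h2 K A r) = sgn ((m+A)/(DD K r + A)^2 - m/(DD K r)^2)"
      unfolding h2_def m_def using Kp by (simp add: sgn_mult)
    also have "\<dots> = sgn (DD K r - m - T)" using alg1[OF D Ap] alg2[OF D Ap T_def] by simp
    also have "DD K r - m - T = b * (power2_of c d Pmax r - Q2)"
      unfolding P2 Q2 m_def using assms by (simp add: field_simps)
    also have "sgn \<dots> = sgn (power2_of c d Pmax r - Q2)" using assms by (simp add: sgn_mult)
    finally show ?thesis .
  qed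
  have part1: "\<forall>r2 \<ge> 0. sgn (deriv (deriv h) r2) = sgn (power2_of c d Pmax r2 - Q2)"
    using sg dd S0 by simp
  have P2x: "power2_of c d Pmax r = (1 + d*Pmax)/c * (2 powr r - 1)" for r
    unfolding power2_of_def by simp
  have coef: "(1 + d*Pmax)/c > 0" using assms by (intro divide_pos_pos add_pos_pos mult_pos_pos) auto
  have Rx: "2 powr R = 1 + c*Pmax/(1+d*Pmax)"
    unfolding R_def r2_max_def using assms by (simp add: powr_log_cancel add_pos_pos)
  have dP: "1 + d*Pmax > 0" using assms by (simp add: add_pos_pos)
  have cdp: "c + Pmax*(c*d) > 0" using assms by (simp add: add_pos_pos)
  have P2R: "power2_of c d Pmax R = Pmax" unfolding P2x Rx using assms dP cdp by (simp add: field_simps)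
  have P2mono: "power2_of c d Pmax r \<le> power2_of c d Pmax s" if "r \<le> s" for r s
  proof -
    have "2 powr r - 1 \<le> 2 powr s - 1" using that by (simp add: powr_mono)
    thus ?thesis unfolding P2x using coef by (rule mult_left_mono[OF _ less_imp_le])
  qed
  have P2smono: "power2_of c d Pmax r < power2_of c d Pmax s" if "r < s" for r s
  proof -
    have "2 powr r - 1 < 2 powr s - 1" using that by (simp add: powr_less_mono)
    thus ?thesis unfolding P2x using coef by (rule mult_strict_left_mono)
  qed
  have P2nn: "power2_of c d Pmax r \<ge> 0" if "r \<ge> 0" for r
    using P2mono[OF that] unfolding P2x by simp
  have CS: "x \<in> S" if "x \<in> {0..R}" for x using that S0 by simp
  have part2: "Q2 \<le> 0 \<longrightarrow> convex_on {0..R} h"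
  proof
    assume q: "Q2 \<le> 0"
    show "convex_on {0..R} h"
    proof (rule f''_ge0_imp_convex[where f' = "h1 K A" and f'' = "h2 K A"])
      fix x assume x: "x \<in> {0..R}"
      show "DERIV h x :> h1 K A x" using d1 CS[OF x] .
      show "DERIV (h1 K A) x :> h2 K A x" using h1_deriv CS[OF x] S_def Ap by simp
      have "power2_of c d Pmax x - Q2 \<ge> 0" using P2nn[of x] x q by simp
      thus "h2 K A x \<ge> 0" using sg[of x] x by (auto simp: sgn_real_def split: if_splits)
    qed simp
  qed
  have part3: "Q2 \<ge> Pmax \<longrightarrow> concave_on {0..R} h"
  proof
    assume q: "Q2 \<ge> Pmax"
    show "concave_on {0..R} h"
    proof (rule f''_le0_imp_concave[where f' = "h1 K A" and f'' = "h2 K A"])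
      fix x assume x: "x \<in> {0..R}"
      show "DERIV h x :> h1 K A x" using d1 CS[OF x] .
      show "DERIV (h1 K A) x :> h2 K A x" using h1_deriv CS[OF x] S_def Ap by simp
      have "power2_of c d Pmax x - Q2 \<le> 0" using P2mono[of x R] P2R x q by simp
      thus "h2 K A x \<le> 0" using sg[of x] x by (auto simp: sgn_real_def split: if_splits)
    qed simp
  qed
  have part4: "0 < Q2 \<and> Q2 < Pmax \<longrightarrow>
          (\<exists>r2\<in>{0<..<R}. power2_of c d Pmax r2 = Q2
             \<and> deriv h r2 \<noteq> 0
             \<and> (\<forall>r\<in>{0..<r2}. deriv (deriv h) r < 0)
             \<and> (\<forall>r\<in>{r2<..R}. deriv (deriv h) r > 0))"
  proof
    assume q: "0 < Q2 \<and> Q2 < Pmax"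
    define r0 where "r0 = log 2 (1 + c*Q2/(1+d*Pmax))"
    have arg: "1 + c*Q2/(1+d*Pmax) > 1" using q assms dP by (simp add: divide_pos_pos)
    have x0: "2 powr r0 = 1 + c*Q2/(1+d*Pmax)" unfolding r0_def using arg by simp
    have pr0: "power2_of c d Pmax r0 = Q2" unfolding P2x x0 using assms dP cdp by (simp add: field_simps)
    have r0p: "r0 > 0" unfolding r0_def using arg by simp
    have r0R: "r0 < R"
    proof (rule ccontr)
      assume "\<not> r0 < R"
      hence "power2_of c d Pmax R \<le> power2_of c d Pmax r0" using P2mono by simp
      thus False using pr0 P2R q by simp
    qed
    have "deriv h r0 = h1 K A r0" using dh S0 r0p by simp
    also have "\<dots> < 0"
    proof -
      have D: "DD K r0 > 0" using DD_ge1[OF Kp] r0p by (meson less_imp_le less_le_trans zero_less_one)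
      have "2 powr r0 / (DD K r0 + A) < 2 powr r0 / DD K r0"
        using D Ap by (simp add: divide_strict_left_mono)
      thus ?thesis unfolding h1_def using Kp by (simp add: mult_pos_neg)
    qed
    finally have nz: "deriv h r0 \<noteq> 0" by simp
    have lt: "deriv (deriv h) r < 0" if "r \<in> {0..<r0}" for r
    proof -
      have "power2_of c d Pmax r - Q2 < 0" using P2smono[of r r0] pr0 that by simp
      hence "h2 K A r < 0" using sg[of r] that by (auto simp: sgn_real_def split: if_splits)
      thus ?thesis using dd S0 that by simp
    qed
    have gt: "deriv (deriv h) r > 0" if "r \<in> {r0<..R}" for r
    proof -
      have "power2_of c d Pmax r - Q2 > 0" using P2smono[of r0 r] pr0 that by simp
      hence "h2 K A r > 0" using sg[of r] that r0p by (auto simp: sgn_real_def split: if_splits)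
      thus ?thesis using dd S0 that r0p by simp
    qed
    show "\<exists>r2\<in>{0<..<R}. power2_of c d Pmax r2 = Q2
             \<and> deriv h r2 \<noteq> 0
             \<and> (\<forall>r\<in>{0..<r2}. deriv (deriv h) r < 0)
             \<and> (\<forall>r\<in>{r2<..R}. deriv (deriv h) r > 0)"
      using r0p r0R pr0 nz lt gt by auto
  qed
  show ?thesis using part1 part2 part3 part4 by blast
qed

end
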